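(* Let $N\in\mathbb{N}$, $a\ge0$, $b>0$, $\alpha:=a+b-1$, $\beta:=b-1$, and let $z_1\le\dots\le z_N$ be the ordered zeros of the Jacobi polynomial $P_N^{(\alpha,\beta)}$. Let $\tilde S=(\tilde s_{i,j})_{i,j=1,\dots,N}$ be the matrix with $$\tilde s_{j,j}=4\sum_{l\ne j}\frac{1-z_j^2}{(z_j-z_l)^2}+2(a+b)\frac{1+z_j}{1-z_j}+2b\frac{1-z_j}{1+z_j},\qquad \tilde s_{i,j}=\frac{-4\sqrt{(1-z_j^2)(1-z_i^2)}}{(z_i-z_j)^2}\ (i\ne j).$$ Then $v_1:=(\sqrt{1-z_1^2},\dots,\sqrt{1-z_N^2})^T$ is an eigenvector of $\tilde S$ with eigenvalue $\lambda_1=2(2N+\alpha+\beta)$.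
   Context: $P_N^{(\alpha,\beta)}$ denotes the classical Jacobi polynomial of degree $N$, orthogonal on $]-1,1[$ with respect to the weight $(1-x)^\alpha(1+x)^\beta$; its zeros are simple and lie in $]-1,1[$. *)

theory Defs
  imports Complex_Main
begin

definition jacobi_poly :: "nat \<Rightarrow> real \<Rightarrow> real \<Rightarrow> real \<Rightarrow> real" where
  "jacobi_poly N al be x =
     (\<Sum>s\<le>N. ((of_nat N + al) gchoose (N - s)) * ((of_nat N + be) gchoose s)
              * ((x - 1) / 2) ^ s * ((x + 1) / 2) ^ (N - s))"

text \<open>The zeros of P_N^(al,be), listed in increasing order, indexed 0..N-1.\<close>
definition jacobi_zero :: "nat \<Rightarrow> real \<Rightarrow> real \<Rightarrow> nat \<Rightarrow> real" where
  "jacobi_zero N al be j = sorted_list_of_set {x. jacobi_poly N al be x = 0} ! j"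

definition S_tilde :: "nat \<Rightarrow> real \<Rightarrow> real \<Rightarrow> (nat \<Rightarrow> real) \<Rightarrow> nat \<Rightarrow> nat \<Rightarrow> real" where
  "S_tilde N a b z i j =
     (if i = j then
        4 * (\<Sum>l\<in>{..<N} - {j}. (1 - (z j)^2) / (z j - z l)^2)
        + 2 * (a + b) * (1 + z j) / (1 - z j) + 2 * b * (1 - z j) / (1 + z j)
      else - 4 * sqrt ((1 - (z j)^2) * (1 - (z i)^2)) / (z i - z j)^2)"

definition is_eigenvector :: "nat \<Rightarrow> (nat \<Rightarrow> nat \<Rightarrow> real) \<Rightarrow> (nat \<Rightarrow> real) \<Rightarrow> real \<Rightarrow> bool" where
  "is_eigenvector N M v lam \<longleftrightarrow>
     (\<exists>i<N. v i \<noteq> 0) \<and> (\<forall>i<N. (\<Sum>j<N. M i j * v j) = lam * v i)"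

end

theory Submission imports Defs "HOL-Computational_Algebra.Polynomial"
begin

lemma gch_step:
  fixes a :: real
  shows "of_nat (Suc k) * (a gchoose Suc k) = (a - of_nat k) * (a gchoose k)"
  using gbinomial_mult_1[of a k] by (simp add: algebra_simps)

lemma F1:
  fixes al be :: real
  assumes "s \<le> m"
  shows "(al + 1 + of_nat s) * (((of_nat (Suc m) + al) gchoose (m - s)) * ((of_nat (Suc m) + be) gchoose s))
    = of_nat (Suc m - s) * (((of_nat (Suc m) + al) gchoose (Suc m - s)) * ((of_nat (Suc m) + be) gchoose s))"
proof -
  have e: "Suc m - s = Suc (m - s)" using assms by simp
  have "of_nat (Suc (m-s)) * ((of_nat (Suc m) + al) gchoose Suc (m - s)) = (of_nat (Suc m) + al - of_nat (m-s)) * ((of_nat (Suc m) + al) gchoose (m - s))"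
    by (rule gch_step)
  moreover have "of_nat (Suc m) + al - of_nat (m-s) = al + 1 + of_nat s" using assms by (simp add: of_nat_diff)
  ultimately show ?thesis unfolding e by (metis mult.assoc)
qed

lemma F2:
  fixes al be :: real
  assumes "s \<le> m"
  shows "(of_nat (Suc m) + be - of_nat s) * (((of_nat (Suc m) + al) gchoose (m - s)) * ((of_nat (Suc m) + be) gchoose s))
    = of_nat (Suc s) * (((of_nat (Suc m) + al) gchoose (Suc m - Suc s)) * ((of_nat (Suc m) + be) gchoose Suc s))"
proof -
  have "of_nat (Suc s) * ((of_nat (Suc m) + be) gchoose Suc s) = (of_nat (Suc m) + be - of_nat s) * ((of_nat (Suc m) + be) gchoose s)"
    by (rule gch_step)
  then show ?thesis by (simp only: diff_Suc_Suc mult.left_commute[of "of_nat (Suc s)"] mult.left_commute[of "of_nat (Suc m) + be - of_nat s"])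
qed

definition jc :: "nat \<Rightarrow> real \<Rightarrow> real \<Rightarrow> nat \<Rightarrow> real" where
  "jc n al be s = ((of_nat n + al) gchoose (n - s)) * ((of_nat n + be) gchoose s)"

definition JD :: "nat \<Rightarrow> real \<Rightarrow> real \<Rightarrow> real \<Rightarrow> real" where
  "JD n al be x = (\<Sum>s\<le>n. jc n al be s * (of_nat s / 2 * ((x - 1) / 2) ^ (s - 1) * ((x + 1) / 2) ^ (n - s)
      + of_nat (n - s) / 2 * ((x - 1) / 2) ^ s * ((x + 1) / 2) ^ (n - s - 1)))"

lemma jp_alt: "jacobi_poly n al be x = (\<Sum>s\<le>n. jc n al be s * ((x - 1) / 2) ^ s * ((x + 1) / 2) ^ (n - s))"
  unfolding jacobi_poly_def jc_def by simp

lemma term_deriv: "DERIV (\<lambda>x. (c::real) * ((x - 1) / 2) ^ s * ((x + 1) / 2) ^ t) x :>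
   c * (of_nat s / 2 * ((x - 1) / 2) ^ (s - 1) * ((x + 1) / 2) ^ t
      + of_nat t / 2 * ((x - 1) / 2) ^ s * ((x + 1) / 2) ^ (t - 1))"
proof -
  have d1: "DERIV (\<lambda>x::real. (x - 1) / 2) (x::real) :> 1/2" by (auto intro!: derivative_eq_intros)
  have d2: "DERIV (\<lambda>x::real. (x + 1) / 2) x :> 1/2" by (auto intro!: derivative_eq_intros)
  have "DERIV (\<lambda>x. c * (((x - 1) / 2) ^ s * ((x + 1) / 2) ^ t)) x :>
     c * ((of_nat s * (1/2 * ((x - 1) / 2) ^ (s - Suc 0))) * ((x + 1) / 2) ^ t + (of_nat t * (1/2 * ((x + 1) / 2) ^ (t - Suc 0))) * ((x - 1) / 2) ^ s)"
    by (intro DERIV_cmult DERIV_mult DERIV_power d1 d2)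
  then show ?thesis by (simp add: algebra_simps mult.assoc)
qed

lemma jp_deriv: "DERIV (jacobi_poly n al be) x :> JD n al be x"
proof -
  have "DERIV (\<lambda>x. (\<Sum>s\<le>n. jc n al be s * ((x - 1) / 2) ^ s * ((x + 1) / 2) ^ (n - s))) x :> JD n al be x"
    unfolding JD_def by (rule DERIV_sum, rule term_deriv)
  moreover have "jacobi_poly n al be = (\<lambda>x. (\<Sum>s\<le>n. jc n al be s * ((x - 1) / 2) ^ s * ((x + 1) / 2) ^ (n - s)))"
    using jp_alt by blast
  ultimately show ?thesis by simp
qed

lemma jc_shift: "jc m (al + 1) (be + 1) s = ((of_nat (Suc m) + al) gchoose (m - s)) * ((of_nat (Suc m) + be) gchoose s)"
  unfolding jc_def by (simp add: algebra_simps)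

lemma I2: "JD (Suc m) al be x = (of_nat (Suc m) + al + be + 1) / 2 * jacobi_poly m (al + 1) (be + 1) x"
proof -
  define u where "u = (x - 1) / 2"
  define v where "v = (x + 1) / 2"
  define f where "f s = jc (Suc m) al be s * (of_nat s / 2 * u ^ (s - 1) * v ^ (Suc m - s))" for s
  define g where "g s = jc (Suc m) al be s * (of_nat (Suc m - s) / 2 * u ^ s * v ^ (Suc m - s - 1))" for s
  have "JD (Suc m) al be x = (\<Sum>s\<le>Suc m. f s + g s)"
    unfolding JD_def f_def g_def u_def v_def by (simp add: algebra_simps)
  also have "\<dots> = (\<Sum>s\<le>Suc m. f s) + (\<Sum>s\<le>Suc m. g s)" by (rule sum.distrib)
  also have "(\<Sum>s\<le>Suc m. f s) = (\<Sum>s\<le>m. f (Suc s))"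
    by (subst sum.atMost_Suc_shift) (simp add: f_def)
  also have "(\<Sum>s\<le>Suc m. g s) = (\<Sum>s\<le>m. g s)"
    by (simp add: g_def)
  also have "(\<Sum>s\<le>m. f (Suc s)) + (\<Sum>s\<le>m. g s) = (\<Sum>s\<le>m. f (Suc s) + g s)"
    by (rule sum.distrib[symmetric])
  also have "\<dots> = (\<Sum>s\<le>m. (of_nat (Suc m) + al + be + 1) / 2 * (jc m (al + 1) (be + 1) s * u ^ s * v ^ (m - s)))"
  proof (rule sum.cong[OF refl])
    fix s assume "s \<in> {..m}"
    then have sm: "s \<le> m" by simp
    note a = F1[OF sm, of al be] F2[OF sm, of be al]
    have "f (Suc s) + g s = (of_nat (Suc s) * jc (Suc m) al be (Suc s) + of_nat (Suc m - s) * jc (Suc m) al be s) / 2 * u ^ s * v ^ (m - s)"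
      unfolding f_def g_def using sm by (simp add: Suc_diff_le of_nat_diff field_simps)
    also have "of_nat (Suc s) * jc (Suc m) al be (Suc s) + of_nat (Suc m - s) * jc (Suc m) al be s
       = (of_nat (Suc m) + al + be + 1) * jc m (al + 1) (be + 1) s"
      using a unfolding jc_shift jc_def by (simp add: algebra_simps)
    finally show "f (Suc s) + g s = (of_nat (Suc m) + al + be + 1) / 2 * (jc m (al + 1) (be + 1) s * u ^ s * v ^ (m - s))"
      by simp
  qed
  also have "\<dots> = (of_nat (Suc m) + al + be + 1) / 2 * jacobi_poly m (al + 1) (be + 1) x"
    unfolding jp_alt u_def v_def by (simp add: sum_distrib_left)
  finally show ?thesis .
qed

lemma termT:
  fixes x al be :: real
  shows "(1 - x^2) * (of_nat s / 2 * ((x - 1) / 2) ^ (s - 1) * ((x + 1) / 2) ^ r + of_nat r / 2 * ((x - 1) / 2) ^ s * ((x + 1) / 2) ^ (r - 1))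
     + ((be + 1) * (1 - x) - (al + 1) * (1 + x)) * (((x - 1) / 2) ^ s * ((x + 1) / 2) ^ r)
   = -2 * ((al + 1 + of_nat s) * ((x - 1) / 2) ^ s * ((x + 1) / 2) ^ Suc r + (of_nat r + be + 1) * ((x - 1) / 2) ^ Suc s * ((x + 1) / 2) ^ r)"
proof -
  define u where "u = (x - 1) / 2"
  define v where "v = (x + 1) / 2"
  have x1: "1 - x^2 = -4 * u * v" unfolding u_def v_def by (simp add: power2_eq_square algebra_simps)
  have x2: "(be + 1) * (1 - x) - (al + 1) * (1 + x) = -2 * (be + 1) * u - 2 * (al + 1) * v"
    unfolding u_def v_def by (simp add: field_simps)
  have hs: "of_nat s * u ^ (s - 1) * u = of_nat s * u ^ s" by (cases s) auto
  have hr: "of_nat r * v ^ (r - 1) * v = of_nat r * v ^ r" by (cases r) auto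
  have "(-4 * u * v) * (of_nat s / 2 * u ^ (s - 1) * v ^ r + of_nat r / 2 * u ^ s * v ^ (r - 1))
     + (-2 * (be + 1) * u - 2 * (al + 1) * v) * (u ^ s * v ^ r)
    = -2 * ((of_nat s * u ^ (s - 1) * u) * v ^ r * v + (of_nat r * v ^ (r - 1) * v) * u ^ s * u
        + (be + 1) * u ^ s * u * v ^ r + (al + 1) * u ^ s * v ^ r * v)"
    by (simp add: algebra_simps)
  also have "\<dots> = -2 * ((al + 1 + of_nat s) * u ^ s * v ^ Suc r + (of_nat r + be + 1) * u ^ Suc s * v ^ r)"
    unfolding hs hr by (simp add: algebra_simps)
  finally show ?thesis unfolding x1 x2 u_def[symmetric] v_def[symmetric] .
qed

lemma I1:
  fixes x al be :: real
  shows "(1 - x^2) * JD m (al + 1) (be + 1) x + ((be + 1) * (1 - x) - (al + 1) * (1 + x)) * jacobi_poly m (al + 1) (be + 1) x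
    = -2 * of_nat (Suc m) * jacobi_poly (Suc m) al be x"
proof -
  define u where "u = (x - 1) / 2"
  define v where "v = (x + 1) / 2"
  define d where "d = jc m (al + 1) (be + 1)"
  define c where "c = jc (Suc m) al be"
  have "(1 - x^2) * JD m (al + 1) (be + 1) x + ((be + 1) * (1 - x) - (al + 1) * (1 + x)) * jacobi_poly m (al + 1) (be + 1) x
     = (\<Sum>s\<le>m. d s * ((1 - x^2) * (of_nat s / 2 * u ^ (s - 1) * v ^ (m - s) + of_nat (m - s) / 2 * u ^ s * v ^ (m - s - 1))
     + ((be + 1) * (1 - x) - (al + 1) * (1 + x)) * (u ^ s * v ^ (m - s))))"
    unfolding JD_def jp_alt d_def u_def v_def by (simp add: sum_distrib_left sum.distrib[symmetric] algebra_simps)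
  also have "\<dots> = (\<Sum>s\<le>m. -2 * (d s * (al + 1 + of_nat s) * u ^ s * v ^ Suc (m - s) + d s * (of_nat (m - s) + be + 1) * u ^ Suc s * v ^ (m - s)))"
  proof (rule sum.cong[OF refl])
    fix s assume "s \<in> {..m}"
    note t = termT[of x s "m - s" be al]
    show "d s * ((1 - x^2) * (of_nat s / 2 * u ^ (s - 1) * v ^ (m - s) + of_nat (m - s) / 2 * u ^ s * v ^ (m - s - 1))
     + ((be + 1) * (1 - x) - (al + 1) * (1 + x)) * (u ^ s * v ^ (m - s)))
     = -2 * (d s * (al + 1 + of_nat s) * u ^ s * v ^ Suc (m - s) + d s * (of_nat (m - s) + be + 1) * u ^ Suc s * v ^ (m - s))"
    proof -
      have "d s * ((1 - x^2) * (of_nat s / 2 * u ^ (s - 1) * v ^ (m - s) + of_nat (m - s) / 2 * u ^ s * v ^ (m - s - 1))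
     + ((be + 1) * (1 - x) - (al + 1) * (1 + x)) * (u ^ s * v ^ (m - s)))
       = d s * (-2 * ((al + 1 + of_nat s) * u ^ s * v ^ Suc (m - s) + (of_nat (m - s) + be + 1) * u ^ Suc s * v ^ (m - s)))"
        unfolding u_def v_def t ..
      then show ?thesis by (simp add: algebra_simps)
    qed
  qed
  also have "\<dots> = -2 * ((\<Sum>s\<le>m. of_nat (Suc m - s) * c s * u ^ s * v ^ (Suc m - s)) + (\<Sum>s\<le>m. of_nat (Suc s) * c (Suc s) * u ^ Suc s * v ^ (Suc m - Suc s)))"
  proof -
    have "d s * (al + 1 + of_nat s) * u ^ s * v ^ Suc (m - s) + d s * (of_nat (m - s) + be + 1) * u ^ Suc s * v ^ (m - s)
      = of_nat (Suc m - s) * c s * u ^ s * v ^ (Suc m - s) + of_nat (Suc s) * c (Suc s) * u ^ Suc s * v ^ (Suc m - Suc s)"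
      if "s \<le> m" for s
    proof -
      note a = F1[OF that, of al be] F2[OF that, of be al]
      have e1: "d s * (al + 1 + of_nat s) = of_nat (Suc m - s) * c s"
        using a(1) unfolding d_def c_def jc_shift jc_def by (simp add: algebra_simps)
      have e2: "d s * (of_nat (m - s) + be + 1) = of_nat (Suc s) * c (Suc s)"
        using a(2) that unfolding d_def c_def jc_shift jc_def by (simp add: algebra_simps of_nat_diff)
      show ?thesis by (simp only: e1 e2 Suc_diff_le[OF that] diff_Suc_Suc)
    qed
    then have "(\<Sum>s\<le>m. -2 * (d s * (al + 1 + of_nat s) * u ^ s * v ^ Suc (m - s) + d s * (of_nat (m - s) + be + 1) * u ^ Suc s * v ^ (m - s)))
      = (\<Sum>s\<le>m. -2 * (of_nat (Suc m - s) * c s * u ^ s * v ^ (Suc m - s) + of_nat (Suc s) * c (Suc s) * u ^ Suc s * v ^ (Suc m - Suc s)))"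
      by (intro sum.cong) auto
    then show ?thesis by (simp only: sum_distrib_left[symmetric] sum.distrib)
  qed
  also have "(\<Sum>s\<le>m. of_nat (Suc m - s) * c s * u ^ s * v ^ (Suc m - s)) = (\<Sum>s\<le>Suc m. of_nat (Suc m - s) * c s * u ^ s * v ^ (Suc m - s))"
    by simp
  also have "(\<Sum>s\<le>m. of_nat (Suc s) * c (Suc s) * u ^ Suc s * v ^ (Suc m - Suc s)) = (\<Sum>s\<le>Suc m. of_nat s * c s * u ^ s * v ^ (Suc m - s))"
    by (subst sum.atMost_Suc_shift) simp
  also have "(\<Sum>s\<le>Suc m. of_nat (Suc m - s) * c s * u ^ s * v ^ (Suc m - s)) + (\<Sum>s\<le>Suc m. of_nat s * c s * u ^ s * v ^ (Suc m - s))
     = (\<Sum>s\<le>Suc m. of_nat (Suc m) * (c s * u ^ s * v ^ (Suc m - s)))"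
    unfolding sum.distrib[symmetric]
    by (rule sum.cong[OF refl]) (simp add: of_nat_diff algebra_simps)
  also have "\<dots> = of_nat (Suc m) * jacobi_poly (Suc m) al be x"
    unfolding jp_alt c_def u_def v_def sum_distrib_left by (simp add: mult.assoc)
  finally show ?thesis by (simp add: algebra_simps)
qed

lemma jp_cont: "continuous_on S (jacobi_poly n al be)"
  by (intro continuous_at_imp_continuous_on ballI DERIV_isCont[OF jp_deriv])

lemma rolle_step:
  fixes al be a b :: real and m :: nat
  assumes al: "al > -1" and be: "be > -1" and ab: "-1 \<le> a" "a < b" "b \<le> 1"
  defines "F \<equiv> (\<lambda>x. (1 - x) powr (al + 1) * (1 + x) powr (be + 1) * jacobi_poly m (al + 1) (be + 1) x)"
  assumes Fa: "F a = 0" and Fb: "F b = 0"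
  shows "\<exists>w. a < w \<and> w < b \<and> jacobi_poly (Suc m) al be w = 0"
proof -
  have cont: "continuous_on {a..b} F"
    unfolding F_def
    by (intro continuous_intros continuous_on_powr' jp_cont) (use ab al be in auto)
  have der: "DERIV F x :> (1 - x) powr al * (1 + x) powr be * (-2 * of_nat (Suc m) * jacobi_poly (Suc m) al be x)"
    if x: "a < x" "x < b" for x
  proof -
    have x1: "1 - x > 0" "1 + x > 0" using x ab by auto
    have dA: "DERIV (\<lambda>x. (1 - x) powr (al + 1)) x :> - (al + 1) * (1 - x) powr al"
      by (rule DERIV_cong[OF DERIV_powr[where g="\<lambda>x. 1 - x" and x=x and m="-1" and f="\<lambda>_. al + 1" and r=0]])
         (use x1 in \<open>auto intro!: derivative_eq_intros simp: powr_add field_simps\<close>)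
    have dB: "DERIV (\<lambda>x. (1 + x) powr (be + 1)) x :> (be + 1) * (1 + x) powr be"
      by (rule DERIV_cong[OF DERIV_powr[where g="\<lambda>x. 1 + x" and x=x and m="1" and f="\<lambda>_. be + 1" and r=0]])
         (use x1 in \<open>auto intro!: derivative_eq_intros simp: powr_add field_simps\<close>)
    have "DERIV F x :> (- (al + 1) * (1 - x) powr al * (1 + x) powr (be + 1) + (be + 1) * (1 + x) powr be * (1 - x) powr (al + 1)) * jacobi_poly m (al + 1) (be + 1) x
        + JD m (al + 1) (be + 1) x * ((1 - x) powr (al + 1) * (1 + x) powr (be + 1))"
      unfolding F_def by (intro DERIV_mult dA dB jp_deriv)
    moreover have "(- (al + 1) * (1 - x) powr al * (1 + x) powr (be + 1) + (be + 1) * (1 + x) powr be * (1 - x) powr (al + 1)) * jacobi_poly m (al + 1) (be + 1) x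
        + JD m (al + 1) (be + 1) x * ((1 - x) powr (al + 1) * (1 + x) powr (be + 1))
       = (1 - x) powr al * (1 + x) powr be * ((1 - x^2) * JD m (al + 1) (be + 1) x + ((be + 1) * (1 - x) - (al + 1) * (1 + x)) * jacobi_poly m (al + 1) (be + 1) x)"
      using x1 by (simp add: powr_add power2_eq_square algebra_simps)
    ultimately show ?thesis unfolding I1 by simp
  qed
  obtain w where w: "a < w" "w < b" "DERIV F w :> 0"
    using Rolle[of a b F] ab(2) Fa Fb cont der by (metis real_differentiable_def)
  have "(1 - w) powr al * (1 + w) powr be * (-2 * of_nat (Suc m) * jacobi_poly (Suc m) al be w) = 0"
    using DERIV_unique[OF der[OF w(1,2)] w(3)] .
  moreover have "(1 - w) powr al * (1 + w) powr be \<noteq> 0" using w ab by auto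
  ultimately show ?thesis using w by auto
qed

lemma jp_zeros:
  fixes al be :: real
  assumes "al > -1" "be > -1"
  shows "\<exists>y. (\<forall>i<n. -1 < y i \<and> y i < 1 \<and> jacobi_poly n al be (y i) = 0) \<and> (\<forall>i j. i < j \<longrightarrow> j < n \<longrightarrow> y i < y j)"
  using assms
proof (induction n arbitrary: al be)
  case 0
  then show ?case by auto
next
  case (Suc m)
  have pr: "al + 1 > -1" "be + 1 > -1" using Suc.prems by auto
  obtain y where y: "\<forall>i<m. -1 < y i \<and> y i < 1 \<and> jacobi_poly m (al + 1) (be + 1) (y i) = 0"
     "\<forall>i j. i < j \<longrightarrow> j < m \<longrightarrow> y i < y j"
    using Suc.IH[OF pr] by blast
  define Y where "Y i = (if i = 0 then -1 else if i \<le> m then y (i - 1) else (1::real))" for i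
  define F where "F = (\<lambda>x::real. (1 - x) powr (al + 1) * (1 + x) powr (be + 1) * jacobi_poly m (al + 1) (be + 1) x)"
  have Ymono: "Y i < Y j" if ij: "i < j" "j \<le> Suc m" for i j
  proof -
    consider "i = 0" "j \<le> m" | "i = 0" "j = Suc m" | "0 < i" "j \<le> m" | "0 < i" "i \<le> m" "j = Suc m"
      using ij by (cases "i = 0"; cases "j \<le> m") auto
    then show ?thesis
    proof cases
      case 1 then show ?thesis using y that unfolding Y_def by simp
    next
      case 2 then show ?thesis unfolding Y_def by simp
    next
      case 3
      then have "i - 1 < j - 1" "j - 1 < m" using that by auto
      then show ?thesis using y 3 that unfolding Y_def by simp
    next
      case 4
      then have "i - 1 < m" by auto
      then show ?thesis using y 4 unfolding Y_def by simp
    qed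
  qed
  have Yrange: "-1 \<le> Y i \<and> Y i \<le> 1" for i
    using y unfolding Y_def by (auto simp: less_imp_le)
  have FY: "F (Y i) = 0" if "i \<le> Suc m" for i
    using that y unfolding Y_def F_def by auto
  have "\<forall>i<Suc m. \<exists>w. Y i < w \<and> w < Y (Suc i) \<and> jacobi_poly (Suc m) al be w = 0"
  proof (intro allI impI)
    fix i assume i: "i < Suc m"
    show "\<exists>w. Y i < w \<and> w < Y (Suc i) \<and> jacobi_poly (Suc m) al be w = 0"
      using rolle_step[of al be "Y i" "Y (Suc i)" m] Suc.prems Yrange Ymono[of i "Suc i"] i FY[of i] FY[of "Suc i"]
      unfolding F_def by auto
  qed
  then obtain w where w: "\<forall>i<Suc m. Y i < w i \<and> w i < Y (Suc i) \<and> jacobi_poly (Suc m) al be (w i) = 0"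
    by (metis (no_types))
  have "w i < w j" if "i < j" "j < Suc m" for i j
  proof -
    have "w i < Y (Suc i)" using w that by auto
    also have "Y (Suc i) \<le> Y j" using Ymono[of "Suc i" j] that by (cases "Suc i = j") auto
    also have "Y j < w j" using w that by auto
    finally show ?thesis .
  qed
  moreover have "-1 < w i \<and> w i < 1 \<and> jacobi_poly (Suc m) al be (w i) = 0" if "i < Suc m" for i
    using w that Yrange[of i] Yrange[of "Suc i"] by fastforce
  ultimately show ?case by blast
qed

definition jpp :: "nat \<Rightarrow> real \<Rightarrow> real \<Rightarrow> real poly" where
  "jpp n al be = (\<Sum>s\<le>n. smult (jc n al be s) ([:-1/2, 1/2:] ^ s * [:1/2, 1/2:] ^ (n - s)))"

lemma poly_jpp: "poly (jpp n al be) x = jacobi_poly n al be x"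
  unfolding jpp_def jp_alt by (simp add: poly_sum field_simps)

lemma degree_term:
  assumes that: "s \<in> {..n}"
  shows "degree (smult (jc n al be s) ([:-1/2, 1/2:] ^ s * [:1/2, 1/2:] ^ (n - s))) \<le> n"
  proof -
    have "degree ([:-1/2, 1/2:] ^ s * [:1/2, 1/2:] ^ (n - s) :: real poly) \<le> degree ([:-1/2, 1/2:] ^ s :: real poly) + degree ([:1/2, 1/2:] ^ (n - s) :: real poly)"
      by (rule degree_mult_le)
    also have "\<dots> \<le> s + (n - s)"
      by (intro add_mono order.trans[OF degree_power_le]) auto
    finally show ?thesis using that by (simp add: order.trans[OF degree_smult_le])
  qed

lemma degree_jpp: "degree (jpp n al be) \<le> n"
  unfolding jpp_def
proof (intro degree_sum_le, simp)
  fix p assume "p \<in> {..n}" then show "degree (smult (jc n al be p) ([:-1/2, 1/2:] ^ p * [:1/2, 1/2:] ^ (n - p))) \<le> n"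
    by (rule degree_term)
qed

lemma gchoose_pos: "a > of_nat k - 1 \<Longrightarrow> (a gchoose k) > (0::real)"
  unfolding gbinomial_altdef_of_nat by (intro prod_pos) auto

lemma jp_at_1: "al > -1 \<Longrightarrow> jacobi_poly n al be 1 \<noteq> 0"
proof -
  assume al: "al > -1"
  have "jacobi_poly n al be 1 = (of_nat n + al) gchoose n"
  proof -
    have "jacobi_poly n al be 1 = (\<Sum>s\<le>n. if s = 0 then ((of_nat n + al) gchoose (n - s)) * ((of_nat n + be) gchoose s) else 0)"
      unfolding jacobi_poly_def by (rule sum.cong) (auto simp: power_0_left)
    then show ?thesis by simp
  qed
  moreover have "(of_nat n + al) gchoose n > 0" using al by (intro gchoose_pos) auto
  ultimately show ?thesis by simp
qed

lemma prod_dvd: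
  fixes p :: "real poly" and k :: nat and y :: "nat \<Rightarrow> real"
  shows "inj_on y {..<k} \<Longrightarrow> (\<forall>i<k. poly p (y i) = 0) \<Longrightarrow> (\<Prod>i<k. [:-y i, 1:]) dvd p"
proof (induction k)
  case 0
  then show ?case by simp
next
  case (Suc k)
  have inj: "inj_on y {..<k}" using Suc.prems(1) by (auto intro: inj_on_subset)
  from Suc.IH[OF inj] Suc.prems(2) obtain q where q: "p = (\<Prod>i<k. [:-y i, 1:]) * q"
    by (auto elim: dvdE)
  have "poly (\<Prod>i<k. [:-y i, 1:]) (y k) \<noteq> 0"
  proof -
    have "y k \<noteq> y i" if "i < k" for i
      using Suc.prems(1) that by (auto dest: inj_onD)
    then show ?thesis by (auto simp: poly_prod)
  qed
  moreover have "poly p (y k) = 0" using Suc.prems(2) by simp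
  ultimately have "poly q (y k) = 0" using q by simp
  then have "[:-y k, 1:] dvd q" using poly_eq_0_iff_dvd by blast
  then have "(\<Prod>i<k. [:-y i, 1:]) * [:-y k, 1:] dvd p" unfolding q by (rule mult_dvd_mono[OF dvd_refl])
  then show ?case by (simp add: mult.commute)
qed

lemma factor_poly:
  fixes p :: "real poly"
  assumes "p \<noteq> 0" "degree p \<le> k" "inj_on y {..<k}" "\<forall>i<k. poly p (y i) = 0"
  shows "\<exists>c. c \<noteq> 0 \<and> p = smult c (\<Prod>i<k. [:-y i, 1:])"
proof -
  obtain q where q: "p = (\<Prod>i<k. [:-y i, 1:]) * q" using prod_dvd[OF assms(3,4)] by (auto elim: dvdE)
  have q0: "q \<noteq> 0" using q assms(1) by auto
  have Q0: "(\<Prod>i<k. [:-y i, 1:]) \<noteq> (0 :: real poly)" by (simp add: prod_zero_iff)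
  have dQ: "degree (\<Prod>i<k. [:-y i, 1:] :: real poly) = k"
    by (subst degree_prod_sum_eq) auto
  have "degree p = k + degree q" using q q0 Q0 dQ by (simp add: degree_mult_eq)
  then have "degree q = 0" using assms(2) by simp
  then obtain c where "q = [:c:]" by (rule degree_eq_zeroE)
  then show ?thesis using q q0 by (auto simp: mult.commute)
qed

lemma pderiv_lin: "pderiv [:a, 1:] = (1 :: real poly)"
  by (simp add: pderiv_pCons)

lemma stieltjes:
  fixes al be c :: real and m i :: nat and y :: "nat \<Rightarrow> real"
  assumes al: "al > -1" and be: "be > -1"
    and inj: "inj_on y {..<Suc m}" and c: "c \<noteq> 0"
    and p: "jpp (Suc m) al be = smult c (\<Prod>i<Suc m. [:-y i, 1:])"
    and i: "i < Suc m"
  shows "2 * (1 - (y i)^2) * (\<Sum>l\<in>{..<Suc m} - {i}. 1 / (y i - y l)) = (al + 1) * (1 + y i) - (be + 1) * (1 - y i)"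
proof -
  define N where "N = Suc m"
  define L where "L = {..<N} - {i}"
  define z where "z = y i"
  define Q where "Q = (\<Prod>l\<in>L. [:-y l, 1:])"
  define K where "K = (of_nat (Suc m) + al + be + 1) / 2"
  define R where "R = jacobi_poly m (al + 1) (be + 1)"
  define DR where "DR = JD m (al + 1) (be + 1)"
  define p where "p = jpp N al be"
  have K0: "K \<noteq> 0" unfolding K_def using al be by simp
  have finL: "finite L" unfolding L_def by simp
  have zL: "z \<noteq> y l" if "l \<in> L" for l
    using that inj i unfolding L_def z_def N_def by (auto dest: inj_onD)
  have pQ: "p = smult c ([:-z, 1:] * Q)"
  proof -
    have "(\<Prod>i<Suc m. [:-y i, 1:]) = [:-y i, 1:] * (\<Prod>l\<in>{..<Suc m} - {i}. [:-y l, 1:])"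
      by (rule prod.remove) (use i in auto)
    then show ?thesis unfolding p_def N_def p Q_def L_def z_def by simp
  qed
  have pf: "(\<lambda>x. poly p x) = jacobi_poly N al be" unfolding p_def by (simp add: poly_jpp)
  have d1: "poly (pderiv p) x = K * R x" for x
  proof -
    have "DERIV (jacobi_poly N al be) x :> poly (pderiv p) x" using poly_DERIV[of p x] unfolding pf .
    from DERIV_unique[OF this jp_deriv] show ?thesis unfolding N_def I2 K_def R_def .
  qed
  have d2: "poly (pderiv (pderiv p)) x = K * DR x" for x
  proof -
    have e: "(\<lambda>x. poly (pderiv p) x) = (\<lambda>x. K * R x)" using d1 by auto
    have "DERIV (\<lambda>x. K * R x) x :> poly (pderiv (pderiv p)) x" using poly_DERIV[of "pderiv p" x] unfolding e .
    moreover have "DERIV (\<lambda>x. K * R x) x :> K * DR x" unfolding R_def DR_def by (intro DERIV_cmult jp_deriv)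
    ultimately show ?thesis by (rule DERIV_unique)
  qed
  have v1: "poly (pderiv p) z = c * poly Q z"
    unfolding pQ pderiv_smult pderiv_mult pderiv_lin by simp
  have v2: "poly (pderiv (pderiv p)) z = 2 * c * poly (pderiv Q) z"
    unfolding pQ pderiv_smult pderiv_mult pderiv_lin pderiv_add by simp
  have Qz: "poly Q z = (\<Prod>l\<in>L. z - y l)" unfolding Q_def by (simp add: poly_prod)
  have Qz0: "poly Q z \<noteq> 0" unfolding Qz using zL finL by simp
  have Q'z: "poly (pderiv Q) z = poly Q z * (\<Sum>l\<in>L. 1 / (z - y l))"
  proof -
    have "poly (pderiv Q) z = (\<Sum>k\<in>L. \<Prod>l\<in>L - {k}. z - y l)"
      unfolding Q_def pderiv_prod by (simp add: poly_sum poly_prod pderiv_lin)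
    also have "\<dots> = (\<Sum>k\<in>L. (\<Prod>l\<in>L. z - y l) * (1 / (z - y k)))"
    proof (rule sum.cong[OF refl])
      fix k assume k: "k \<in> L"
      have "(\<Prod>l\<in>L. z - y l) = (z - y k) * (\<Prod>l\<in>L - {k}. z - y l)"
        using k finL by (simp add: prod.remove)
      then show "(\<Prod>l\<in>L - {k}. z - y l) = (\<Prod>l\<in>L. z - y l) * (1 / (z - y k))"
        using zL[OF k] by simp
    qed
    also have "\<dots> = poly Q z * (\<Sum>l\<in>L. 1 / (z - y l))" unfolding Qz by (simp add: sum_distrib_left)
    finally show ?thesis .
  qed
  define T where "T = (\<Sum>l\<in>L. 1 / (z - y l))"
  have Rz: "K * R z = c * poly Q z" using d1 v1 by simp
  have Rz0: "R z \<noteq> 0" using Rz c Qz0 K0 by auto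
  have DRz: "K * DR z = 2 * (K * R z) * T" using d2 v2 Q'z Rz unfolding T_def by simp
  then have DRz': "DR z = 2 * R z * T" using K0 by (simp add: algebra_simps)
  have Pz: "jacobi_poly (Suc m) al be z = 0"
  proof -
    have "poly p z = 0" unfolding pQ by simp
    then show ?thesis using pf unfolding N_def by (metis)
  qed
  have "(1 - z^2) * DR z + ((be + 1) * (1 - z) - (al + 1) * (1 + z)) * R z = 0"
    unfolding DR_def R_def I1 Pz by simp
  then have "R z * (2 * (1 - z^2) * T - ((al + 1) * (1 + z) - (be + 1) * (1 - z))) = 0"
    unfolding DRz' by (simp add: algebra_simps)
  then have "2 * (1 - z^2) * T = (al + 1) * (1 + z) - (be + 1) * (1 - z)" using Rz0 by simp
  then show ?thesis unfolding T_def L_def N_def z_def .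
qed

lemma final_arith:
  fixes zi T a b :: real and N :: nat
  assumes "N \<ge> 1" "-1 < zi" "zi < 1"
    and T: "2 * (1 - zi^2) * T = (a + b) * (1 + zi) - b * (1 - zi)"
  shows "4 * (real N - 1) - 8 * zi * T + (2 * (a + b) * (1 + zi) / (1 - zi) + 2 * b * (1 - zi) / (1 + zi))
     = 2 * (2 * real N + (a + b - 1) + (b - 1))"
proof -
  have p: "1 - zi > 0" "1 + zi > 0" using assms by auto
  have "1 - zi^2 = (1 - zi) * (1 + zi)" by (simp add: power2_eq_square algebra_simps)
  then have "T * (2 * (1 - zi) * (1 + zi)) = (a + b) * (1 + zi) - b * (1 - zi)"
    using T by (simp add: algebra_simps)
  moreover have "2 * (1 - zi) * (1 + zi) \<noteq> 0" using p by simp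
  ultimately have T': "T = ((a + b) * (1 + zi) - b * (1 - zi)) / (2 * (1 - zi) * (1 + zi))"
    by (simp add: eq_divide_eq)
  define A where "A = inverse (1 - zi)"
  define B where "B = inverse (1 + zi)"
  have hA: "A * (1 - zi) = 1" unfolding A_def using p by simp
  have hB: "B * (1 + zi) = 1" unfolding B_def using p by simp
  have "4 * (real N - 1) - 8 * zi * T + (2 * (a + b) * (1 + zi) * A + 2 * b * (1 - zi) * B)
     = 2 * (2 * real N + (a + b - 1) + (b - 1))"
    using hA hB T by algebra
  then show ?thesis unfolding A_def B_def by (simp add: divide_inverse)
qed

theorem lemma3p3:
  fixes N :: nat and a b :: real
  assumes "N \<ge> 1" and "a \<ge> 0" and "b > 0"
  defines "al \<equiv> a + b - 1" and "be \<equiv> b - 1"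
  defines "z \<equiv> jacobi_zero N al be"
  shows "is_eigenvector N (S_tilde N a b z) (\<lambda>i. sqrt (1 - (z i)^2)) (2 * (2 * real N + al + be))"
proof -
  obtain m where Nm: "N = Suc m" using assms(1) by (cases N) auto
  have al: "al > -1" and be: "be > -1" unfolding al_def be_def using assms by auto
  obtain y where y: "\<forall>i<N. -1 < y i \<and> y i < 1 \<and> jacobi_poly N al be (y i) = 0"
      and ymono: "\<forall>i j. i < j \<longrightarrow> j < N \<longrightarrow> y i < y j"
    using jp_zeros[OF al be, of N] by blast
  have inj: "inj_on y {..<N}"
  proof (rule inj_onI)
    fix i j assume "i \<in> {..<N}" "j \<in> {..<N}" "y i = y j"
    then show "i = j" using ymono by (metis lessThan_iff less_irrefl nat_neq_iff)
  qed
  define p where "p = jpp N al be"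
  have p0: "p \<noteq> 0"
  proof
    assume "p = 0"
    then have "jacobi_poly N al be 1 = 0" using poly_jpp[of N al be 1] unfolding p_def by simp
    then show False using jp_at_1[OF al] by blast
  qed
  obtain c where c: "c \<noteq> 0" and pc: "p = smult c (\<Prod>i<N. [:-y i, 1:])"
    using factor_poly[OF p0 _ inj] degree_jpp y unfolding p_def by (metis poly_jpp)
  have zeroset: "{x. jacobi_poly N al be x = 0} = y ` {..<N}"
  proof -
    have "jacobi_poly N al be x = 0 \<longleftrightarrow> (\<exists>i<N. x = y i)" for x
    proof -
      have "jacobi_poly N al be x = poly p x" unfolding p_def poly_jpp ..
      also have "\<dots> = c * (\<Prod>i<N. x - y i)" unfolding pc by (simp add: poly_prod)
      finally show ?thesis using c by auto
    qed
    then show ?thesis by auto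
  qed
  have zy: "z j = y j" if "j < N" for j
  proof -
    have "sorted_list_of_set (y ` {..<N}) = map y [0..<N]"
    proof (subst sorted_list_of_set_unique[symmetric])
      show "finite (y ` {..<N})" by simp
      show "sorted_wrt (<) (map y [0..<N]) \<and> set (map y [0..<N]) = y ` {..<N} \<and> length (map y [0..<N]) = card (y ` {..<N})"
        using ymono inj by (auto simp: sorted_wrt_iff_nth_less card_image)
    qed
    then show ?thesis unfolding z_def jacobi_zero_def zeroset using that by simp
  qed
  have zr: "-1 < z j \<and> z j < 1" if "j < N" for j using y zy that by auto
  have zinj: "z i \<noteq> z l" if "i < N" "l < N" "i \<noteq> l" for i l
    using zy that inj by (metis inj_onD lessThan_iff)
  have T: "2 * (1 - (z i)^2) * (\<Sum>l\<in>{..<N} - {i}. 1 / (z i - z l)) = (a + b) * (1 + z i) - b * (1 - z i)"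
    if i: "i < N" for i
  proof -
    have "jpp (Suc m) al be = smult c (\<Prod>i<Suc m. [:-y i, 1:])" using pc unfolding p_def Nm .
    from stieltjes[OF al be inj[unfolded Nm] c this i[unfolded Nm]]
    have "2 * (1 - (y i)^2) * (\<Sum>l\<in>{..<N} - {i}. 1 / (y i - y l)) = (al + 1) * (1 + y i) - (be + 1) * (1 - y i)"
      unfolding Nm .
    moreover have "(\<Sum>l\<in>{..<N} - {i}. 1 / (y i - y l)) = (\<Sum>l\<in>{..<N} - {i}. 1 / (z i - z l))"
      using zy i by (intro sum.cong) auto
    ultimately show ?thesis using zy[OF i] unfolding al_def be_def by simp
  qed
  define v where "v i = sqrt (1 - (z i)^2)" for i
  have vpos: "v j > 0" if "j < N" for j
  proof -
    have "(z j)^2 < 1" using zr[OF that] by (simp add: abs_square_less_1 abs_less_iff)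
    then show ?thesis unfolding v_def by simp
  qed
  have eig: "(\<Sum>j<N. S_tilde N a b z i j * v j) = 2 * (2 * real N + al + be) * v i" if i: "i < N" for i
  proof -
    define L where "L = {..<N} - {i}"
    define E where "E = 2 * (a + b) * (1 + z i) / (1 - z i) + 2 * b * (1 - z i) / (1 + z i)"
    define Tm where "Tm = (\<Sum>l\<in>L. 1 / (z i - z l))"
    have finL: "finite L" unfolding L_def by simp
    have cardL: "card L = N - 1" unfolding L_def using i by simp
    have "(\<Sum>j<N. S_tilde N a b z i j * v j) = S_tilde N a b z i i * v i + (\<Sum>j\<in>L. S_tilde N a b z i j * v j)"
      unfolding L_def by (rule sum.remove) (use i in auto)
    also have "(\<Sum>j\<in>L. S_tilde N a b z i j * v j) = (\<Sum>j\<in>L. -4 * v i * ((1 - (z j)^2) / (z i - z j)^2))"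
    proof (rule sum.cong[OF refl])
      fix j assume j: "j \<in> L"
      then have jN: "j < N" "j \<noteq> i" unfolding L_def by auto
      have vv: "v j * v j = 1 - (z j)^2" unfolding v_def using vpos[OF jN(1)] unfolding v_def
        using zr[OF jN(1)] by (simp add: abs_square_less_1 abs_less_iff less_imp_le)
      have "sqrt ((1 - (z j)^2) * (1 - (z i)^2)) = v j * v i" unfolding v_def by (simp add: real_sqrt_mult)
      then have Sij: "S_tilde N a b z i j = -4 * (v j * v i) / (z i - z j)^2"
        unfolding S_tilde_def using jN by simp
      have dnz: "(z i - z j)^2 \<noteq> 0" using zinj[OF i jN(1)] jN by auto
      have "S_tilde N a b z i j * v j = -4 * v i * ((v j * v j) / (z i - z j)^2)"
        unfolding Sij using dnz by (simp add: field_simps)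
      then show "S_tilde N a b z i j * v j = -4 * v i * ((1 - (z j)^2) / (z i - z j)^2)"
        unfolding vv .
    qed
    also have "S_tilde N a b z i i = 4 * (\<Sum>l\<in>L. (1 - (z i)^2) / (z i - z l)^2) + E"
      unfolding S_tilde_def L_def E_def by simp
    also have "(\<Sum>j\<in>L. -4 * v i * ((1 - (z j)^2) / (z i - z j)^2)) = -4 * v i * (\<Sum>j\<in>L. (1 - (z j)^2) / (z i - z j)^2)"
      by (simp add: sum_distrib_left)
    finally have "(\<Sum>j<N. S_tilde N a b z i j * v j)
        = v i * (4 * ((\<Sum>l\<in>L. (1 - (z i)^2) / (z i - z l)^2) - (\<Sum>l\<in>L. (1 - (z l)^2) / (z i - z l)^2)) + E)"
      by (simp only: algebra_simps)
    also have "(\<Sum>l\<in>L. (1 - (z i)^2) / (z i - z l)^2) - (\<Sum>l\<in>L. (1 - (z l)^2) / (z i - z l)^2)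
        = (\<Sum>l\<in>L. 1 - 2 * z i * (1 / (z i - z l)))"
      unfolding sum_subtractf[symmetric]
    proof (rule sum.cong[OF refl])
      fix l assume "l \<in> L"
      then have "z i - z l \<noteq> 0" using zinj[OF i, of l] unfolding L_def by auto
      then show "(1 - (z i)^2) / (z i - z l)^2 - (1 - (z l)^2) / (z i - z l)^2 = 1 - 2 * z i * (1 / (z i - z l))"
      proof -
        define D where "D = inverse (z i - z l)"
        have hD: "D * (z i - z l) = 1" unfolding D_def using \<open>z i - z l \<noteq> 0\<close> by simp
        have "(1 - (z i)^2) * D^2 - (1 - (z l)^2) * D^2 = 1 - 2 * z i * D" using hD by algebra
        then show ?thesis unfolding D_def by (simp add: divide_inverse power_inverse)
      qed
    qed
    also have "\<dots> = real (N - 1) - 2 * z i * Tm"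
      unfolding sum_subtractf Tm_def sum_distrib_left[symmetric] using cardL by simp
    also have "v i * (4 * (real (N - 1) - 2 * z i * Tm) + E) = v i * (2 * (2 * real N + al + be))"
    proof -
      have "4 * (real N - 1) - 8 * z i * Tm + E = 2 * (2 * real N + (a + b - 1) + (b - 1))"
        unfolding E_def
        by (rule final_arith) (use assms(1) zr[OF i] T[OF i] in \<open>auto simp: Tm_def L_def\<close>)
      then show ?thesis using assms(1) unfolding al_def be_def by (simp add: of_nat_diff algebra_simps)
    qed
    finally show ?thesis by simp
  qed
  show ?thesis
    unfolding is_eigenvector_def
  proof (intro conjI allI impI)
    have "0 < N" using assms(1) by simp
    moreover have "sqrt (1 - (z 0)^2) \<noteq> 0" using vpos[of 0] assms(1) unfolding v_def by simp
    ultimately show "\<exists>i<N. sqrt (1 - (z i)^2) \<noteq> 0" by blast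
    fix i assume "i < N"
    then show "(\<Sum>j<N. S_tilde N a b z i j * sqrt (1 - (z j)^2)) = 2 * (2 * real N + al + be) * sqrt (1 - (z i)^2)"
      using eig unfolding v_def by simp
  qed
qed

end
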